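(* Let $\ell=\ell_{log}$ and let $\hat w$ be the hard-margin SVM solution. Suppose the overparameterization, logistic-setup, and active-margin assumptions (see context) hold. Then for every gradient descent iterate, $-\alpha_t\langle\hat w,\nabla_w\mathcal R_t\rangle\ge0$, and if $\alpha_t>0$, $$-\langle\hat w,\nabla_w\mathcal R_t\rangle\ge\frac{\lambda_{\min}}{8}\cdot\frac{\alpha_te^{-\alpha_t}}{\|w_t\|_\Sigma}(\rho_t^\perp)^2.$$
   Context: Data: $n$ samples $(x_i,y_i)$, $x_i\in\mathbb R^d$, $y_i\in\{1,-1\}$; $X=[x_1,\dots,x_n]$, $\tilde X=X\,\mathrm{diag}(y)$, $\Sigma=\frac1n\tilde X\tilde X^T$, $\|a\|_\Sigma^2=a^T\Sigma a$, $\langle a,b\rangle_\Sigma=a^T\Sigma b$; unsubscripted norms/inner products Euclidean. Risk $\mathcal R(w,\alpha)=\frac1n\sum_i\ell(\alpha y_i\langle x_i,w\rangle/\|w\|_\Sigma)$ with $\ell_{log}(z)=\log(1+e^{-z})$. Gradient descent with $\eta,\eta_\alpha>0$: $w_{t+1}=w_t-\eta\nabla_w\mathcal R(w_t,\alpha_t)$, $\alpha_{t+1}=\alpha_t-\eta_\alpha\partial_\alpha\mathcal R(w_t,\alpha_t)$, $\alpha_0>0$; $\mathcal R_t=\mathcal R(w_t,\alpha_t)$. Assumptions: (overparameterization) $n<d$ and $\mathrm{rank}X=n$; (logistic setup) the data are linearly separable and $w_0\in\mathrm{span}\{x_1,\dots,x_n\}\setminus\{0\}$; SVM solution $\hat w:=\arg\min\{\|w\|: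 y_i\langle x_i,w\rangle\ge1\ \forall i\}$, margin $\gamma:=1/\|\hat w\|$; (active margin) $y_i\langle x_i,\hat w\rangle=1$ for all $i\in[n]$. With $\mathcal X:=\mathrm{span}\{x_1,\dots,x_n\}\setminus\{0\}$, $\lambda_{\max}:=\sup_{w\in\mathcal X}\|w\|_\Sigma^2/\|w\|^2$, $\lambda_{\min}:=\inf_{w\in\mathcal X}\|w\|_\Sigma^2/\|w\|^2$. $\rho_t:=\langle\hat w,w_t\rangle/\|w_t\|$, $\rho_t^\perp:=\|\hat w-\rho_tw_t/\|w_t\|\|$. *)

theory Defs
  imports "HOL-Analysis.Analysis"
begin

definition data_matrix :: "('n::finite \<Rightarrow> real^'d::finite) \<Rightarrow> real^'n^'d" where
  "data_matrix x = (\<chi> j i. x i $ j)"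

definition labeled_matrix :: "('n::finite \<Rightarrow> real^'d::finite) \<Rightarrow> ('n \<Rightarrow> real) \<Rightarrow> real^'n^'d" where
  "labeled_matrix x y = data_matrix x ** (\<chi> i j. if i = j then y i else 0)"

definition Sigma_mat :: "('n::finite \<Rightarrow> real^'d::finite) \<Rightarrow> ('n \<Rightarrow> real) \<Rightarrow> real^'d^'d" where
  "Sigma_mat x y = (1 / real CARD('n)) *\<^sub>R (labeled_matrix x y ** transpose (labeled_matrix x y))"

definition signorm :: "('n::finite \<Rightarrow> real^'d::finite) \<Rightarrow> ('n \<Rightarrow> real) \<Rightarrow> real^'d \<Rightarrow> real" where
  "signorm x y a = sqrt (a \<bullet> (Sigma_mat x y *v a))"

definition ell_log :: "real \<Rightarrow> real" where
  "ell_log z = ln (1 + exp (- z))"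

definition risk :: "('n::finite \<Rightarrow> real^'d::finite) \<Rightarrow> ('n \<Rightarrow> real) \<Rightarrow> real^'d \<Rightarrow> real \<Rightarrow> real" where
  "risk x y w \<alpha> = (1 / real CARD('n)) *
     (\<Sum>i\<in>UNIV. ell_log (\<alpha> * y i * (x i \<bullet> w) / signorm x y w))"

definition grad_w :: "('n::finite \<Rightarrow> real^'d::finite) \<Rightarrow> ('n \<Rightarrow> real) \<Rightarrow> real^'d \<Rightarrow> real \<Rightarrow> real^'d" where
  "grad_w x y w \<alpha> = (THE g. ((\<lambda>v. risk x y v \<alpha>) has_derivative (\<lambda>h. g \<bullet> h)) (at w))"

definition deriv_alpha :: "('n::finite \<Rightarrow> real^'d::finite) \<Rightarrow> ('n \<Rightarrow> real) \<Rightarrow> real^'d \<Rightarrow> real \<Rightarrow> real" where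
  "deriv_alpha x y w \<alpha> = deriv (\<lambda>a. risk x y w a) \<alpha>"

definition is_svm_solution :: "('n::finite \<Rightarrow> real^'d::finite) \<Rightarrow> ('n \<Rightarrow> real) \<Rightarrow> real^'d \<Rightarrow> bool" where
  "is_svm_solution x y wh \<longleftrightarrow>
     (\<forall>i. y i * (x i \<bullet> wh) \<ge> 1) \<and>
     (\<forall>w. (\<forall>i. y i * (x i \<bullet> w) \<ge> 1) \<longrightarrow> norm wh \<le> norm w)"

definition lambda_min :: "('n::finite \<Rightarrow> real^'d::finite) \<Rightarrow> ('n \<Rightarrow> real) \<Rightarrow> real" where
  "lambda_min x y = Inf ((\<lambda>w. (signorm x y w)\<^sup>2 / (norm w)\<^sup>2) ` (span (range x) - {0}))"

definition lambda_max :: "('n::finite \<Rightarrow> real^'d::finite) \<Rightarrow> ('n \<Rightarrow> real) \<Rightarrow> real" where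
  "lambda_max x y = Sup ((\<lambda>w. (signorm x y w)\<^sup>2 / (norm w)\<^sup>2) ` (span (range x) - {0}))"

definition rho :: "real^'d::finite \<Rightarrow> real^'d \<Rightarrow> real" where
  "rho wh w = (wh \<bullet> w) / norm w"

definition rho_perp :: "real^'d::finite \<Rightarrow> real^'d \<Rightarrow> real" where
  "rho_perp wh w = norm (wh - (rho wh w / norm w) *\<^sub>R w)"

end

theory Submission
  imports Defs
begin

definition sgm :: "real \<Rightarrow> real \<Rightarrow> real" where
  "sgm a u = 1 / (1 + exp (a * u))"

lemma sgm_pos: "sgm a u > 0"
  unfolding sgm_def by (simp add: add_pos_pos)

lemma sgm_le1: "sgm a u \<le> 1"
  unfolding sgm_def using add_pos_pos[OF zero_less_one exp_gt_zero[of "a*u"]] by (simp add: divide_le_eq)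

lemma sgm_mono: assumes "a > 0" "u \<le> v" shows "sgm a v \<le> sgm a u"
  unfolding sgm_def using assms
  by (intro divide_left_mono) (auto simp: add_pos_pos mult_left_mono)

lemma sgm_nonpos: assumes "a > 0" "u \<le> 0" shows "sgm a u \<ge> 1/2"
proof -
  have "exp (a*u) \<le> 1" using assms by (simp add: mult_nonneg_nonpos)
  then show ?thesis unfolding sgm_def using add_pos_pos[OF zero_less_one exp_gt_zero[of "a*u"]] by (simp add: le_divide_eq)
qed

lemma sgm_lower: assumes "a > 0" shows "sgm a u \<ge> exp (-a)/2 * (1 - a*(u\<^sup>2-1)/2)"
proof -
  define v where "v = (1 + u\<^sup>2)/2"
  have "0 \<le> (u-1)*(u-1)" by simp
  hence uv: "u \<le> v" unfolding v_def by (simp add: power2_eq_square algebra_simps)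
  have v0: "v \<ge> 0" unfolding v_def by simp
  have "sgm a u \<ge> sgm a v" using sgm_mono[OF assms uv] .
  moreover have "sgm a v \<ge> exp (- (a * v))/2"
  proof -
    have "exp (a * v) \<ge> 1" using assms v0 by simp
    hence "1 + exp (a * v) \<le> 2 * exp (a * v)" by simp
    hence "1 / (1 + exp (a * v)) \<ge> 1 / (2 * exp (a * v))"
      by (intro divide_left_mono) (auto simp: add_pos_pos)
    thus ?thesis unfolding sgm_def by (simp add: exp_minus field_simps)
  qed
  moreover have "exp (- (a * v)) \<ge> exp (-a) * (1 - a*(u\<^sup>2-1)/2)"
  proof -
    have "exp (- (a * v)) = exp (-a) * exp (- (a * (v-1)))" by (simp add: exp_add[symmetric] algebra_simps)
    moreover have "exp (- (a * (v-1))) \<ge> 1 - a * (v-1)" using exp_ge_add_one_self[of "- (a * (v-1))"] by simp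
    moreover have "a * (v-1) = a*(u\<^sup>2-1)/2" unfolding v_def by (simp add: field_simps)
    ultimately show ?thesis by (simp add: mult_left_mono)
  qed
  ultimately show ?thesis by (smt (verit) divide_right_mono times_divide_eq_left)
qed

lemma sgm_sum_lower:
  assumes "finite I" "a > 0" "(\<Sum>i\<in>I. (u i)\<^sup>2) = real (card I)"
  shows "(\<Sum>i\<in>I. sgm a (u i)) \<ge> real (card I) * (exp (-a)/2)"
proof -
  have "(\<Sum>i\<in>I. sgm a (u i)) \<ge> (\<Sum>i\<in>I. exp (-a)/2 * (1 - a*((u i)\<^sup>2-1)/2))"
    by (rule sum_mono) (rule sgm_lower[OF assms(2)])
  also have "(\<Sum>i\<in>I. exp (-a)/2 * (1 - a*((u i)\<^sup>2-1)/2))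
      = (\<Sum>i\<in>I. exp (-a)/2 * (1 + a/2) - (exp (-a)/2 * (a/2)) * (u i)\<^sup>2)"
    by (rule sum.cong) (auto simp: field_simps)
  also have "\<dots> = real (card I) * (exp (-a)/2 * (1 + a/2)) - (exp (-a)/2 * (a/2)) * (\<Sum>i\<in>I. (u i)\<^sup>2)"
    by (simp add: sum_subtractf sum_distrib_left)
  also have "\<dots> = real (card I) * (exp (-a)/2)" using assms(3) by (simp add: algebra_simps)
  finally show ?thesis .
qed

lemma sgm_cheb:
  assumes "finite I" "a > 0"
  shows "real (card I) * (\<Sum>i\<in>I. sgm a (u i) * u i) \<le> (\<Sum>i\<in>I. sgm a (u i)) * (\<Sum>i\<in>I. u i)"
proof -
  let ?s = "\<lambda>i. sgm a (u i)"
  have "(\<Sum>i\<in>I. \<Sum>j\<in>I. (?s i - ?s j) * (u i - u j)) \<le> 0"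
  proof (intro sum_nonpos)
    fix i j
    show "(?s i - ?s j) * (u i - u j) \<le> 0"
    proof (cases "u i \<le> u j")
      case True
      then have "?s j \<le> ?s i" using sgm_mono[OF assms(2)] by blast
      with True show ?thesis by (simp add: mult_nonneg_nonpos)
    next
      case False
      then have "?s i \<le> ?s j" using sgm_mono[OF assms(2)] by simp
      with False show ?thesis by (simp add: mult_nonpos_nonneg)
    qed
  qed
  moreover have "(\<Sum>i\<in>I. \<Sum>j\<in>I. (?s i - ?s j) * (u i - u j))
     = 2 * (real (card I) * (\<Sum>i\<in>I. ?s i * u i)) - 2 * ((\<Sum>i\<in>I. ?s i) * (\<Sum>i\<in>I. u i))"
  proof -
    have "(\<Sum>i\<in>I. \<Sum>j\<in>I. (?s i - ?s j) * (u i - u j))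
      = (\<Sum>i\<in>I. \<Sum>j\<in>I. ?s i * u i + ?s j * u j - ?s i * u j - ?s j * u i)"
      by (simp add: algebra_simps)
    also have "\<dots> = (\<Sum>i\<in>I. \<Sum>j\<in>I. ?s i * u i) + (\<Sum>i\<in>I. \<Sum>j\<in>I. ?s j * u j)
         - (\<Sum>i\<in>I. \<Sum>j\<in>I. ?s i * u j) - (\<Sum>i\<in>I. \<Sum>j\<in>I. ?s j * u i)"
      by (simp add: sum.distrib sum_subtractf)
    also have "\<dots> = 2 * (real (card I) * (\<Sum>i\<in>I. ?s i * u i)) - 2 * ((\<Sum>i\<in>I. ?s i) * (\<Sum>i\<in>I. u i))"
    proof -
      have 1: "(\<Sum>i\<in>I. \<Sum>j\<in>I. ?s i * u i) = real (card I) * (\<Sum>i\<in>I. ?s i * u i)"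
        by (simp add: sum_distrib_left)
      have 2: "(\<Sum>i\<in>I. \<Sum>j\<in>I. ?s j * u j) = real (card I) * (\<Sum>i\<in>I. ?s i * u i)"
        by simp
      have 3: "(\<Sum>i\<in>I. \<Sum>j\<in>I. ?s i * u j) = (\<Sum>i\<in>I. ?s i) * (\<Sum>i\<in>I. u i)"
        by (simp add: sum_product)
      have 4: "(\<Sum>i\<in>I. \<Sum>j\<in>I. ?s j * u i) = (\<Sum>i\<in>I. ?s i) * (\<Sum>i\<in>I. u i)"
        by (simp add: sum_product mult.commute)
      show ?thesis unfolding 1 2 3 4 by simp
    qed
    finally show ?thesis .
  qed
  ultimately show ?thesis by linarith
qed

lemma mean_sq_le:
  assumes "finite I" "I \<noteq> {}" "(\<Sum>i\<in>I. (u i)\<^sup>2) = real (card I)"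
  shows "((\<Sum>i\<in>I. u i) / real (card I))\<^sup>2 \<le> 1"
proof -
  define N where "N = real (card I)"
  define m where "m = (\<Sum>i\<in>I. u i) / N"
  have N0: "N > 0" unfolding N_def using assms by (simp add: card_gt_0_iff)
  have "0 \<le> (\<Sum>i\<in>I. (u i - m)\<^sup>2)" by (simp add: sum_nonneg)
  also have "\<dots> = (\<Sum>i\<in>I. (u i)\<^sup>2 - 2*m*u i + m\<^sup>2)" by (simp add: power2_diff algebra_simps)
  also have "\<dots> = (\<Sum>i\<in>I. (u i)\<^sup>2) - 2*m*(\<Sum>i\<in>I. u i) + N * m\<^sup>2"
    by (simp add: sum.distrib sum_subtractf sum_distrib_left N_def)
  also have "(\<Sum>i\<in>I. u i) = N * m" using N0 unfolding m_def by simp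
  finally have "0 \<le> N - N * m\<^sup>2" using assms(3) unfolding N_def by (simp add: power2_eq_square algebra_simps)
  hence "N * m\<^sup>2 \<le> N * 1" by simp
  hence "m\<^sup>2 \<le> 1" using N0 by (meson mult_le_cancel_left_pos)
  thus ?thesis unfolding m_def N_def .
qed

lemma exp_neg1_le: "exp (-1::real) \<le> 3/8"
proof -
  have "exp (1::real) \<ge> 8/3" using e_approx_32 by (simp add: abs_if split: if_splits)
  thus ?thesis by (simp add: exp_minus inverse_eq_divide field_simps)
qed

lemma xexp_le: "(x::real) * exp (-x) \<le> exp (-1)"
proof -
  have "x \<le> exp (x - 1)" using exp_ge_add_one_self[of "x-1"] by simp
  hence "x * exp (-x) \<le> exp (x-1) * exp (-x)" by (simp add: mult_right_mono)
  also have "\<dots> = exp (-1)" by (simp add: exp_add[symmetric])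
  finally show ?thesis .
qed

lemma sgm_refl: "sgm a (- v) = 1 - sgm a v"
  unfolding sgm_def
proof -
  define E where "E = exp (a * v)"
  have p: "E > 0" unfolding E_def by simp
  have "exp (a * - v) = 1 / E" unfolding E_def by (simp add: exp_minus inverse_eq_divide)
  moreover have "1 / (1 + 1 / E) = 1 - 1 / (1 + E)"
    using p by (simp add: field_simps)
  ultimately show "1 / (1 + exp (a * - v)) = 1 - 1 / (1 + exp (a * v))"
    unfolding E_def by simp
qed

lemma sgm_convex: assumes a: "a > 0" shows "convex_on {0..} (sgm a)"
proof (rule convex_on_realI[where f' = "\<lambda>x. - (a * exp (a*x)) / (1 + exp (a*x))\<^sup>2"])
  show "connected {0::real..}" by simp
next
  fix x :: real assume "x \<in> {0..}"
  have p: "1 + exp (a*x) \<noteq> 0" by (smt (verit) exp_gt_zero)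
  show "(sgm a has_real_derivative - (a * exp (a*x)) / (1 + exp (a*x))\<^sup>2) (at x)"
    unfolding sgm_def[abs_def]
    by (rule derivative_eq_intros refl | use p in \<open>simp add: power2_eq_square\<close>)+
next
  fix x y :: real assume xy: "x \<in> {0..}" "y \<in> {0..}" "x \<le> y"
  define E1 where "E1 = exp (a*x)"
  define E2 where "E2 = exp (a*y)"
  have E: "1 \<le> E1" "E1 \<le> E2" unfolding E1_def E2_def using xy a by (auto simp: mult_left_mono)
  have "E2 * (1 + E1)\<^sup>2 \<le> E1 * (1 + E2)\<^sup>2"
  proof -
    have "E1 * (1 + E2)\<^sup>2 - E2 * (1 + E1)\<^sup>2 = (E2 - E1) * (E1 * E2 - 1)"
      by (simp add: power2_eq_square algebra_simps)
    moreover have "E1 * E2 \<ge> 1 * 1" using E by (intro mult_mono) auto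
    moreover have "(E2 - E1) * (E1 * E2 - 1) \<ge> 0" using E calculation(2)
      by (intro mult_nonneg_nonneg) auto
    ultimately show ?thesis by simp
  qed
  hence "E2 / (1 + E2)\<^sup>2 \<le> E1 / (1 + E1)\<^sup>2" using E
    by (simp add: divide_simps add_pos_pos) 
  hence "a * (E2 / (1 + E2)\<^sup>2) \<le> a * (E1 / (1 + E1)\<^sup>2)" by (rule mult_left_mono) (use a in simp)
  thus "- (a * exp (a*x)) / (1 + exp (a*x))\<^sup>2 \<le> - (a * exp (a*y)) / (1 + exp (a*y))\<^sup>2"
    unfolding E1_def[symmetric] E2_def[symmetric] by simp
qed

lemma sgm_pw:
  assumes a: "a > 0" and b: "b > 0" and bge: "b \<ge> exp (-a)/3"
  defines "c \<equiv> exp (-a)/8"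
  defines "t \<equiv> -1/b"
  defines "s \<equiv> b * (sgm a t - c)"
  shows "sgm a u * (1 + b*u) \<ge> (1 + b*u) * (c - s*u)"
proof -
  have t0: "t < 0" unfolding t_def using b by simp
  have ft: "sgm a t \<ge> 1/2" using sgm_nonpos[OF a] t0 by simp
  have ea: "exp (-a) \<le> 1" using a by simp
  have c8: "c \<le> 1/8" unfolding c_def using ea by simp
  have c0: "c > 0" unfolding c_def by simp
  have s38: "s \<ge> b * (3/8)" unfolding s_def using ft c8 b by (intro mult_left_mono) auto
  have sc: "s \<ge> c" using s38 bge unfolding c_def by simp
  have sb: "s / b = sgm a t - c" unfolding s_def using b by simp
  have bt: "b * t = -1" unfolding t_def using b by simp
  show ?thesis
  proof (cases "u \<ge> 0")
    case True
    have pos: "1 + b*u > 0" using True b by (simp add: add_pos_nonneg)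
    have "sgm a u \<ge> c - s*u"
    proof (cases "u \<le> 1")
      case True
      have "sgm a u \<ge> sgm a 1" using sgm_mono[OF a True] .
      moreover have "sgm a 1 \<ge> exp (-a)/2" using sgm_lower[OF a, of 1] by simp
      moreover have "s * u \<ge> 0" using \<open>u \<ge> 0\<close> sc c0 by simp
      ultimately show ?thesis unfolding c_def using exp_gt_zero[of "-a"] by linarith
    next
      case False
      hence "s * u \<ge> s * 1" using sc c0 by (intro mult_left_mono) auto
      thus ?thesis using sc sgm_pos[of a u] by linarith
    qed
    thus ?thesis using pos by (simp add: mult_left_mono mult.commute)
  next
    case False
    show ?thesis
    proof (cases "u \<ge> t")
      case True
      have "b * u \<ge> b * t" using True b by (simp add: mult_left_mono)
      hence pos: "1 + b*u \<ge> 0" using bt by simp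
      define v where "v = - u"
      define V where "V = 1 / b"
      have v0: "v \<ge> 0" "v \<le> V" using False True unfolding v_def V_def t_def by auto
      have V0: "V > 0" unfolding V_def using b by simp
      define th where "th = v / V"
      have th: "th \<ge> 0" "th \<le> 1" unfolding th_def using v0 V0 by auto
      have "sgm a v = sgm a ((1 - th) *\<^sub>R 0 + th *\<^sub>R V)" unfolding th_def using V0 by simp
      also have "\<dots> \<le> (1 - th) * sgm a 0 + th * sgm a V"
        by (rule convex_onD[OF sgm_convex[OF a]]) (use th V0 in auto)
      finally have cv: "sgm a v \<le> (1 - th)/2 + th * sgm a V" by (simp add: sgm_def)
      have r1: "sgm a u = 1 - sgm a v" unfolding v_def using sgm_refl[of a "-u"] by simp
      have r2: "sgm a t = 1 - sgm a V" unfolding V_def t_def by (simp add: sgm_refl[symmetric])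
      have thb: "th = b * v" unfolding th_def V_def using b by simp
      have e1: "c - s * u = c + th * sgm a t - th * c" unfolding s_def thb v_def by (simp add: algebra_simps)
      have "(1 - 2*c) * (1 - th) \<ge> 0" using c8 th by simp
      hence e2: "1 - 2*c - th + 2 * (th * c) \<ge> 0" by (simp add: algebra_simps)
      have e3: "th * sgm a V = th - th * sgm a t" unfolding r2 by (simp add: algebra_simps)
      have e4: "2 * sgm a v \<le> 1 - th + 2 * (th * sgm a V)" using cv by (simp add: field_simps)
      have "sgm a u \<ge> c - s*u" using r1 e1 e2 e3 e4 by (simp add: mult.commute)
      thus ?thesis using pos by (metis mult.commute mult_right_mono)
    next
      case False
      hence ut: "u < t" by simp
      have "b * u < b * t" using ut b by simp
      hence neg: "1 + b*u < 0" using bt by simp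
      have e1: "sgm a u - sgm a t \<le> exp (a*t) - exp (a*u)"
      proof -
        have "sgm a u - sgm a t = (exp (a*t) - exp (a*u)) / ((1 + exp (a*u)) * (1 + exp (a*t)))"
        proof -
          have p1: "1 + exp (a*u) \<noteq> 0" "1 + exp (a*t) \<noteq> 0" by (smt (verit) exp_gt_zero)+
          show ?thesis unfolding sgm_def using p1 by (simp add: divide_simps)
        qed
        moreover have "exp (a*t) - exp (a*u) \<ge> 0" using ut a by simp
        moreover have "(1 + exp (a*u)) * (1 + exp (a*t)) \<ge> 1 * 1"
          by (intro mult_mono) (smt (verit) exp_gt_zero)+
        ultimately show ?thesis using divide_left_mono[of 1 "(1 + exp (a*u)) * (1 + exp (a*t))" "exp (a*t) - exp (a*u)"]
          by simp
      qed
      have e2: "exp (a*t) - exp (a*u) \<le> exp (a*t) * (a * (t - u))"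
      proof -
        have "exp (a*u) = exp (a*t) * exp (- (a * (t-u)))" by (simp add: exp_add[symmetric] algebra_simps)
        moreover have "exp (- (a * (t-u))) \<ge> 1 - a * (t - u)" using exp_ge_add_one_self[of "- (a * (t-u))"] by simp
        ultimately have "exp (a*u) \<ge> exp (a*t) * (1 - a * (t - u))" by (simp add: mult_left_mono)
        thus ?thesis by (simp add: algebra_simps)
      qed
      have e3: "exp (a*t) * a \<le> s"
      proof -
        have "exp (a*t) * a = b * ((a/b) * exp (- (a/b)))" unfolding t_def using b by (simp add: field_simps)
        also have "\<dots> \<le> b * exp (-1)" by (rule mult_left_mono[OF xexp_le]) (use b in simp)
        also have "\<dots> \<le> b * (3/8)" using exp_neg1_le b by (simp add: mult_left_mono)
        finally show ?thesis using s38 by linarith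
      qed
      have "sgm a u - sgm a t \<le> s * (t - u)"
      proof -
        have "exp (a*t) * (a * (t - u)) = (exp (a*t) * a) * (t - u)" by simp
        also have "\<dots> \<le> s * (t - u)" using e3 ut by (intro mult_right_mono) auto
        finally show ?thesis using e1 e2 by linarith
      qed
      moreover have "c - s*u = sgm a t + s * (t - u)"
      proof -
        have "s * t = - (s / b)" unfolding t_def by simp
        thus ?thesis using sb by (simp add: algebra_simps)
      qed
      ultimately have "sgm a u \<le> c - s*u" by linarith
      thus ?thesis using neg by (simp add: mult_left_mono_neg mult.commute)
    qed
  qed
qed

lemma key_scalar:
  assumes fin: "finite I" and ne: "I \<noteq> {}" and a: "a > 0"
    and sq: "(\<Sum>i\<in>I. (u i)\<^sup>2) = real (card I)"
  shows "(\<Sum>i\<in>I. sgm a (u i) * (1 - u i * ((\<Sum>j\<in>I. u j) / real (card I))))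
         \<ge> real (card I) * (exp (-a)/8) * (1 - ((\<Sum>j\<in>I. u j) / real (card I))\<^sup>2)"
proof -
  define N where "N = real (card I)"
  define m where "m = (\<Sum>j\<in>I. u j) / N"
  define S where "S = (\<Sum>i\<in>I. sgm a (u i))"
  have N0: "N > 0" unfolding N_def using fin ne by (simp add: card_gt_0_iff)
  have J: "S \<ge> N * (exp (-a)/2)" unfolding S_def N_def by (rule sgm_sum_lower[OF fin a sq])
  have m1: "m\<^sup>2 \<le> 1" unfolding m_def N_def by (rule mean_sq_le[OF fin ne sq])
  have sumu: "(\<Sum>j\<in>I. u j) = N * m" unfolding m_def using N0 by simp
  have ea: "exp (-a) > 0" by simp
  have F: "(\<Sum>i\<in>I. sgm a (u i) * (1 - u i * m)) = S - m * (\<Sum>i\<in>I. sgm a (u i) * u i)"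
    unfolding S_def by (simp add: algebra_simps sum_subtractf sum_distrib_left)
  have "(\<Sum>i\<in>I. sgm a (u i) * (1 - u i * m)) \<ge> N * (exp (-a)/8) * (1 - m\<^sup>2)"
  proof (cases "m \<ge> 0")
    case True
    have "N * (\<Sum>i\<in>I. sgm a (u i) * u i) \<le> S * (N * m)"
      using sgm_cheb[OF fin a, of u] unfolding S_def N_def[symmetric] sumu .
    hence "(\<Sum>i\<in>I. sgm a (u i) * u i) \<le> S * m" using N0 by (simp add: algebra_simps)
    hence "m * (\<Sum>i\<in>I. sgm a (u i) * u i) \<le> m * (S * m)" using True by (rule mult_left_mono)
    hence "(\<Sum>i\<in>I. sgm a (u i) * (1 - u i * m)) \<ge> S * (1 - m\<^sup>2)"
      unfolding F by (simp add: power2_eq_square algebra_simps)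
    moreover have "S * (1 - m\<^sup>2) \<ge> N * (exp (-a)/2) * (1 - m\<^sup>2)"
      using J m1 by (intro mult_right_mono) auto
    moreover have "N * (exp (-a)/2) * (1 - m\<^sup>2) \<ge> N * (exp (-a)/8) * (1 - m\<^sup>2)"
      using N0 ea m1 by (intro mult_right_mono) auto
    ultimately show ?thesis by linarith
  next
    case False
    define b where "b = - m"
    have b0: "b > 0" unfolding b_def using False by simp
    have Fb: "(\<Sum>i\<in>I. sgm a (u i) * (1 - u i * m)) = (\<Sum>i\<in>I. sgm a (u i) * (1 + b * u i))"
      unfolding b_def by (simp add: algebra_simps)
    show ?thesis
    proof (cases "b \<le> exp (-a)/3")
      case True
      have "(\<Sum>i\<in>I. sgm a (u i) * (1 + b * u i)) \<ge> (\<Sum>i\<in>I. sgm a (u i) - b * (1 + (u i)\<^sup>2)/2)"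
      proof (rule sum_mono)
        fix i assume "i \<in> I"
        have "\<bar>sgm a (u i) * u i\<bar> \<le> \<bar>u i\<bar>"
          using sgm_pos[of a "u i"] sgm_le1[of a "u i"] by (simp add: abs_mult mult_left_le_one_le)
        moreover have "\<bar>u i\<bar> \<le> (1 + (u i)\<^sup>2)/2"
        proof -
          have "0 \<le> (\<bar>u i\<bar> - 1)\<^sup>2" by simp
          thus ?thesis by (simp add: power2_eq_square algebra_simps)
        qed
        ultimately have "sgm a (u i) * u i \<ge> - ((1 + (u i)\<^sup>2)/2)" by linarith
        hence "b * (sgm a (u i) * u i) \<ge> b * (- ((1 + (u i)\<^sup>2)/2))" using b0 by (intro mult_left_mono) auto
        thus "sgm a (u i) - b * (1 + (u i)\<^sup>2)/2 \<le> sgm a (u i) * (1 + b * u i)"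
          by (simp add: algebra_simps)
      qed
      also have "(\<Sum>i\<in>I. sgm a (u i) - b * (1 + (u i)\<^sup>2)/2) = S - b * (N + N)/2"
        unfolding S_def N_def using sq
        by (simp add: sum_subtractf sum_distrib_left[symmetric] sum_divide_distrib[symmetric] sum.distrib)
      finally have "(\<Sum>i\<in>I. sgm a (u i) * (1 + b * u i)) \<ge> S - b * N" by simp
      moreover have "b * N \<le> exp (-a)/3 * N" using True N0 by (intro mult_right_mono) auto
      moreover have "N * (exp (-a)/8) * (1 - m\<^sup>2) \<le> N * (exp (-a)/8)"
        using N0 ea by (simp add: mult_le_cancel_left_pos)
      moreover have "exp (-a)/3 * N = (exp (-a) * N) / 3" "N * (exp (-a)/8) = (exp (-a) * N) / 8"
        "N * (exp (-a)/2) = (exp (-a) * N) / 2" by (simp_all add: algebra_simps)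
      moreover have "exp (-a) * N > 0" using N0 ea by simp
      ultimately show ?thesis unfolding Fb using J by linarith
    next
      case False
      define c where "c = exp (-a)/8"
      define t where "t = -1/b"
      define s where "s = b * (sgm a t - c)"
      have "(\<Sum>i\<in>I. sgm a (u i) * (1 + b * u i)) \<ge> (\<Sum>i\<in>I. (1 + b * u i) * (c - s * u i))"
        by (rule sum_mono) (unfold c_def s_def t_def, rule sgm_pw[OF a b0], use False in simp)
      also have "(\<Sum>i\<in>I. (1 + b * u i) * (c - s * u i)) = N * c - (s - b * c) * (\<Sum>i\<in>I. u i) - b * s * (\<Sum>i\<in>I. (u i)\<^sup>2)"
        unfolding N_def
        by (simp add: algebra_simps power2_eq_square sum.distrib sum_subtractf sum_distrib_left)
      also have "\<dots> = N * c * (1 - m\<^sup>2)"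
        unfolding sumu sq N_def[symmetric] b_def by (simp add: power2_eq_square algebra_simps)
      finally show ?thesis unfolding Fb c_def by simp
    qed
  qed
  thus ?thesis unfolding m_def N_def .
qed


lemma labeled_entry: "labeled_matrix x y $ j $ i = x i $ j * y i"
  unfolding labeled_matrix_def data_matrix_def matrix_matrix_mult_def
  by (simp add: if_distrib[of "\<lambda>z. _ * z"] cong: if_cong)

lemma labT_mult: "transpose (labeled_matrix x y) *v a = (\<chi> i. y i * (x i \<bullet> a))"
  unfolding transpose_def matrix_vector_mult_def inner_vec_def
  by (simp add: labeled_entry sum_distrib_left algebra_simps)

lemma lab_mult: "labeled_matrix x y *v v = (\<Sum>i\<in>UNIV. (y i * v $ i) *\<^sub>R x i)"
  unfolding matrix_vector_mult_def
  by (simp add: vec_eq_iff labeled_entry sum_component algebra_simps)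

lemma sigma_mult:
  fixes x :: "'n::finite \<Rightarrow> real^'d::finite"
  shows "Sigma_mat x y *v a = (\<Sum>i\<in>UNIV. ((y i * (y i * (x i \<bullet> a))) / real CARD('n)) *\<^sub>R x i)"
proof -
  have "Sigma_mat x y *v a = (1 / real CARD('n)) *\<^sub>R (labeled_matrix x y *v (transpose (labeled_matrix x y) *v a))"
    unfolding Sigma_mat_def by (simp only: scaleR_matrix_vector_assoc matrix_vector_mul_assoc)
  also have "\<dots> = (\<Sum>i\<in>UNIV. ((y i * (y i * (x i \<bullet> a))) / real CARD('n)) *\<^sub>R x i)"
    unfolding labT_mult lab_mult by (simp add: scaleR_sum_right)
  finally show ?thesis .
qed

lemma sigma_quad:
  fixes x :: "'n::finite \<Rightarrow> real^'d::finite"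
  shows "a \<bullet> (Sigma_mat x y *v a) = (\<Sum>i\<in>UNIV. (y i * (x i \<bullet> a))\<^sup>2) / real CARD('n)"
  unfolding sigma_mult
  by (simp add: inner_sum_right sum_divide_distrib power2_eq_square inner_commute algebra_simps)

definition Qf :: "('n::finite \<Rightarrow> real^'d::finite) \<Rightarrow> real^'d \<Rightarrow> real" where
  "Qf x a = (\<Sum>i\<in>UNIV. (x i \<bullet> a)\<^sup>2) / real CARD('n)"

lemma signorm_eq:
  assumes "\<forall>i. y i = 1 \<or> y i = -1"
  shows "signorm x y a = sqrt (Qf x a)"
proof -
  have "\<And>i. (y i * (x i \<bullet> a))\<^sup>2 = (x i \<bullet> a)\<^sup>2"
    using assms by (metis mult_minus_left mult_1 power2_minus)
  thus ?thesis unfolding signorm_def sigma_quad Qf_def by simp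
qed

lemma ell_log_deriv: "DERIV ell_log z :> - (1 / (1 + exp z))"
proof -
  have p: "1 + exp (- z) > 0" by (simp add: add_pos_pos)
  have "DERIV (\<lambda>z. ln (1 + exp (- z))) z :> (1 / (1 + exp (-z))) * (exp (- z) * (-1))"
    by (rule derivative_eq_intros refl | use p in simp)+
  moreover have "(1 / (1 + exp (-z))) * (exp (- z) * (-1)) = - (1 / (1 + exp z))"
  proof -
    have "exp (-z) * exp z = 1" by (simp add: exp_minus)
    moreover have "1 + exp z > 0" by (simp add: add_pos_pos)
    ultimately show ?thesis using p by (simp add: field_simps)
  qed
  ultimately show ?thesis unfolding ell_log_def[abs_def] by simp
qed

lemma Qf_deriv:
  fixes x :: "'n::finite \<Rightarrow> real^'d::finite"
  shows "((\<lambda>v. Qf x v) has_derivative (\<lambda>h. (\<Sum>i\<in>UNIV. 2 * (x i \<bullet> w) * (x i \<bullet> h)) / real CARD('n))) (at w)"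
  unfolding Qf_def
  by (rule derivative_eq_intros refl | simp add: sum_divide_distrib mult.commute mult.left_commute)+

definition sv :: "('n::finite \<Rightarrow> real^'d::finite) \<Rightarrow> real^'d \<Rightarrow> real" where
  "sv x w = sqrt (Qf x w)"

definition fv :: "('n::finite \<Rightarrow> real^'d::finite) \<Rightarrow> ('n \<Rightarrow> real) \<Rightarrow> real^'d \<Rightarrow> real \<Rightarrow> 'n \<Rightarrow> real" where
  "fv x y w \<alpha> i = 1 / (1 + exp (\<alpha> * y i * (x i \<bullet> w) / sv x w))"

definition Pv :: "('n::finite \<Rightarrow> real^'d::finite) \<Rightarrow> ('n \<Rightarrow> real) \<Rightarrow> real^'d \<Rightarrow> real \<Rightarrow> real" where
  "Pv x y w \<alpha> = (\<Sum>j\<in>UNIV. fv x y w \<alpha> j * y j * (x j \<bullet> w))"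

definition gradG :: "('n::finite \<Rightarrow> real^'d::finite) \<Rightarrow> ('n \<Rightarrow> real) \<Rightarrow> real^'d \<Rightarrow> real \<Rightarrow> real^'d" where
  "gradG x y w \<alpha> = (\<Sum>i\<in>UNIV. (\<alpha> / real CARD('n) * (Pv x y w \<alpha> * (x i \<bullet> w) / (real CARD('n) * sv x w ^ 3)
      - y i * fv x y w \<alpha> i / sv x w)) *\<^sub>R x i)"

lemma risk_deriv:
  fixes x :: "'n::finite \<Rightarrow> real^'d::finite"
  assumes labels: "\<forall>i. y i = 1 \<or> y i = -1" and q0: "Qf x w > 0"
  shows "((\<lambda>v. risk x y v \<alpha>) has_derivative (\<lambda>h. gradG x y w \<alpha> \<bullet> h)) (at w)"
proof -
  define N where "N = real CARD('n)"
  define s where "s = sqrt (Qf x w)"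
  have s0: "s > 0" unfolding s_def using q0 by simp
  have N0: "N > 0" unfolding N_def by simp
  define dQ where "dQ = (\<lambda>h. (\<Sum>i\<in>UNIV. 2 * (x i \<bullet> w) * (x i \<bullet> h)) / N)"
  define ds where "ds = (\<lambda>h. dQ h * (inverse s / 2))"
  have hs: "((\<lambda>v. sqrt (Qf x v)) has_derivative ds) (at w)"
    unfolding ds_def dQ_def N_def s_def
    by (rule DERIV_compose_FDERIV[OF DERIV_real_sqrt[OF q0] Qf_deriv])
  define dz where "dz = (\<lambda>i h. (\<alpha> * y i * (x i \<bullet> h) * s - \<alpha> * y i * (x i \<bullet> w) * ds h) / (s * s))"
  define z where "z = (\<lambda>i v. \<alpha> * y i * (x i \<bullet> v) / sqrt (Qf x v))"
  have hz: "((\<lambda>v. z i v) has_derivative dz i) (at w)" for i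
  proof -
    have hf: "((\<lambda>v. \<alpha> * y i * (x i \<bullet> v)) has_derivative (\<lambda>h. \<alpha> * y i * (x i \<bullet> h))) (at w)"
      by (auto intro!: derivative_eq_intros)
    show ?thesis unfolding z_def dz_def
      using has_derivative_divide'[OF hf hs] s0 unfolding s_def by simp
  qed
  define e where "e = (\<lambda>i. - (1 / (1 + exp (z i w))))"
  have hl: "((\<lambda>v. ell_log (z i v)) has_derivative (\<lambda>h. dz i h * e i)) (at w)" for i
    unfolding e_def by (rule DERIV_compose_FDERIV[OF ell_log_deriv hz])
  have hr: "((\<lambda>v. (1 / N) * (\<Sum>i\<in>UNIV. ell_log (z i v))) has_derivative
       (\<lambda>h. (1 / N) * (\<Sum>i\<in>UNIV. dz i h * e i))) (at w)"
    by (intro has_derivative_mult_right has_derivative_sum hl)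
  have req: "(\<lambda>v. risk x y v \<alpha>) = (\<lambda>v. (1 / N) * (\<Sum>i\<in>UNIV. ell_log (z i v)))"
    unfolding risk_def z_def N_def signorm_eq[OF labels] by simp
  have deq: "(\<lambda>h. (1 / N) * (\<Sum>i\<in>UNIV. dz i h * e i)) = (\<lambda>h. gradG x y w \<alpha> \<bullet> h)"
  proof
    fix h
    define f where "f = fv x y w \<alpha>"
    define P where "P = Pv x y w \<alpha>"
    have svs: "sv x w = s" unfolding sv_def s_def ..
    have ef: "e i = - f i" for i unfolding e_def f_def fv_def z_def svs s_def by simp
    have P_eq: "P = (\<Sum>i\<in>UNIV. f i * y i * (x i \<bullet> w))" unfolding P_def Pv_def f_def ..
    define M where "M = (\<Sum>i\<in>UNIV. (x i \<bullet> w) * (x i \<bullet> h))"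
    have ds_eq: "ds h = M / (N * s)"
      unfolding ds_def dQ_def M_def using s0 N0
      by (simp add: sum_distrib_left[symmetric] field_simps)
    have trm: "dz i h * e i = - (\<alpha> / s * (y i * f i * (x i \<bullet> h))) + (\<alpha> * ds h / (s * s)) * (f i * y i * (x i \<bullet> w))" for i
      unfolding dz_def ef using s0 by (simp add: field_simps)
    have "(1 / N) * (\<Sum>i\<in>UNIV. dz i h * e i)
        = (1 / N) * (- (\<alpha> / s * (\<Sum>i\<in>UNIV. y i * f i * (x i \<bullet> h))) + (\<alpha> * ds h / (s * s)) * P)"
      unfolding trm P_eq by (simp add: sum.distrib sum_distrib_left sum_negf sum_subtractf sum_divide_distrib[symmetric])
    also have "\<dots> = \<alpha> / N * (P * M / (N * s ^ 3)) - \<alpha> / N * (\<Sum>i\<in>UNIV. y i * f i * (x i \<bullet> h)) / s"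
      unfolding ds_eq using s0 N0 by (simp add: field_simps power3_eq_cube)
    also have "\<dots> = gradG x y w \<alpha> \<bullet> h"
      unfolding gradG_def inner_sum_left inner_scaleR_left M_def svs f_def[symmetric] P_def[symmetric]
      by (simp add: N_def algebra_simps sum_subtractf sum_distrib_left sum_divide_distrib)
    finally show "(1 / N) * (\<Sum>i\<in>UNIV. dz i h * e i) = gradG x y w \<alpha> \<bullet> h" .
  qed
  show ?thesis using hr unfolding req deq .
qed

lemma grad_w_eq:
  fixes x :: "'n::finite \<Rightarrow> real^'d::finite"
  assumes labels: "\<forall>i. y i = 1 \<or> y i = -1" and q0: "Qf x w > 0"
  shows "grad_w x y w \<alpha> = gradG x y w \<alpha>"
  unfolding grad_w_def
proof (rule the_equality)
  show "((\<lambda>v. risk x y v \<alpha>) has_derivative (\<lambda>h. gradG x y w \<alpha> \<bullet> h)) (at w)"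
    by (rule risk_deriv[OF labels q0])
next
  fix g assume "((\<lambda>v. risk x y v \<alpha>) has_derivative (\<lambda>h. g \<bullet> h)) (at w)"
  hence "(\<lambda>h. g \<bullet> h) = (\<lambda>h. gradG x y w \<alpha> \<bullet> h)"
    using has_derivative_unique risk_deriv[OF labels q0] by blast
  hence "g \<bullet> (g - gradG x y w \<alpha>) = gradG x y w \<alpha> \<bullet> (g - gradG x y w \<alpha>)" by metis
  hence "(g - gradG x y w \<alpha>) \<bullet> (g - gradG x y w \<alpha>) = 0" by (simp add: inner_diff_left)
  thus "g = gradG x y w \<alpha>" by simp
qed

lemma gradG_span: "gradG x y w \<alpha> \<in> span (range x)"
  unfolding gradG_def by (intro span_sum span_scale span_base) auto

lemma Qf_nonneg: "Qf x w \<ge> 0"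
  unfolding Qf_def by (simp add: sum_nonneg)

lemma sum_m2:
  fixes x :: "'n::finite \<Rightarrow> real^'d::finite"
  shows "(\<Sum>i\<in>UNIV. (x i \<bullet> w)\<^sup>2) = real CARD('n) * (sv x w)\<^sup>2"
  using Qf_nonneg[of x w] unfolding sv_def Qf_def by simp

lemma gradG_inner_self:
  fixes x :: "'n::finite \<Rightarrow> real^'d::finite"
  assumes q0: "Qf x w > 0"
  shows "w \<bullet> gradG x y w \<alpha> = 0"
proof -
  define N where "N = real CARD('n)"
  define s where "s = sv x w"
  define P where "P = Pv x y w \<alpha>"
  define f where "f = fv x y w \<alpha>"
  have s0: "s > 0" unfolding s_def sv_def using q0 by simp
  have N0: "N > 0" unfolding N_def by simp
  have "w \<bullet> gradG x y w \<alpha> = (\<Sum>i\<in>UNIV. \<alpha> / N * (P * (x i \<bullet> w)\<^sup>2 / (N * s ^ 3)) - \<alpha> / N * (f i * y i * (x i \<bullet> w)) / s)"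
    unfolding gradG_def inner_sum_right inner_scaleR_right N_def[symmetric] s_def[symmetric] P_def[symmetric] f_def[symmetric]
    by (rule sum.cong) (auto simp: inner_commute power2_eq_square algebra_simps)
  also have "\<dots> = \<alpha> / N * (P * (\<Sum>i\<in>UNIV. (x i \<bullet> w)\<^sup>2) / (N * s ^ 3)) - \<alpha> / N * P / s"
    unfolding P_def Pv_def f_def[symmetric]
    by (simp add: sum_subtractf sum_distrib_left sum_divide_distrib[symmetric] sum_distrib_right[symmetric])
  also have "\<dots> = 0"
    unfolding sum_m2 N_def[symmetric] s_def[symmetric] using s0 N0
    by (simp add: field_simps power3_eq_cube power2_eq_square)
  finally show ?thesis .
qed

lemma gradG_inner_wh:
  fixes x :: "'n::finite \<Rightarrow> real^'d::finite"
  assumes labels: "\<forall>i. y i = 1 \<or> y i = -1" and q0: "Qf x w > 0"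
    and hw: "\<forall>i. x i \<bullet> wh = y i"
  shows "- (wh \<bullet> gradG x y w \<alpha>) = \<alpha> / (real CARD('n) * sv x w) *
    (\<Sum>i\<in>UNIV. sgm \<alpha> (y i * (x i \<bullet> w) / sv x w) *
        (1 - (y i * (x i \<bullet> w) / sv x w) * ((\<Sum>j\<in>UNIV. y j * (x j \<bullet> w) / sv x w) / real CARD('n))))"
proof -
  define N where "N = real CARD('n)"
  define s where "s = sv x w"
  define u where "u = (\<lambda>i. y i * (x i \<bullet> w) / s)"
  define f where "f = fv x y w \<alpha>"
  have s0: "s > 0" unfolding s_def sv_def using q0 by simp
  have N0: "N > 0" unfolding N_def by simp
  have yy: "y i * y i = 1" for i using labels by (metis mult_minus_left mult_1 minus_minus)
  have ym: "y i * (x i \<bullet> w) = s * u i" for i unfolding u_def using s0 by simp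
  have my: "x i \<bullet> w = s * y i * u i" for i
  proof -
    have "x i \<bullet> w = y i * (y i * (x i \<bullet> w))" using yy[of i] by (simp add: mult.assoc[symmetric])
    thus ?thesis unfolding ym by simp
  qed
  have hw2: "wh \<bullet> x i = y i" for i using hw by (simp add: inner_commute)
  have my2: "w \<bullet> x i = s * y i * u i" for i using my[of i] by (simp add: inner_commute)
  have fu: "f i = sgm \<alpha> (u i)" for i
    unfolding f_def fv_def sgm_def u_def s_def by simp
  have P: "Pv x y w \<alpha> = s * (\<Sum>j\<in>UNIV. f j * u j)"
    unfolding Pv_def f_def[symmetric] by (simp add: sum_distrib_left mult.assoc ym algebra_simps)
  have "wh \<bullet> gradG x y w \<alpha> = (\<Sum>i\<in>UNIV. \<alpha> / N * (Pv x y w \<alpha> * (s * u i * (y i * y i)) / (N * s ^ 3)) - \<alpha> / N * (f i * (y i * y i)) / s)"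
    unfolding gradG_def inner_sum_right inner_scaleR_right N_def[symmetric] s_def[symmetric] f_def[symmetric]
    by (rule sum.cong) (auto simp: hw hw2 my my2 algebra_simps)
  also have "\<dots> = \<alpha> / N * (s * (\<Sum>j\<in>UNIV. f j * u j) * (s * (\<Sum>i\<in>UNIV. u i)) / (N * s ^ 3)) - \<alpha> / N * (\<Sum>i\<in>UNIV. f i) / s"
    unfolding yy P
    by (simp add: sum_subtractf sum_distrib_left sum_divide_distrib[symmetric] sum_distrib_right[symmetric])
  finally have A: "wh \<bullet> gradG x y w \<alpha> = \<dots>" .
  have B: "(\<Sum>i\<in>UNIV. sgm \<alpha> (u i) * (1 - u i * ((\<Sum>j\<in>UNIV. u j) / N)))
      = (\<Sum>i\<in>UNIV. f i) - (\<Sum>j\<in>UNIV. f j * u j) * (\<Sum>i\<in>UNIV. u i) / N"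
    unfolding fu[symmetric] by (simp add: algebra_simps sum_subtractf sum_distrib_left sum_distrib_right sum_divide_distrib)
  have "- (wh \<bullet> gradG x y w \<alpha>) = \<alpha> / (N * s) * ((\<Sum>i\<in>UNIV. f i) - (\<Sum>j\<in>UNIV. f j * u j) * (\<Sum>i\<in>UNIV. u i) / N)"
    unfolding A using s0 N0 by (simp add: field_simps power3_eq_cube)
  hence "- (wh \<bullet> gradG x y w \<alpha>) = \<alpha> / (N * s) * (\<Sum>i\<in>UNIV. sgm \<alpha> (u i) * (1 - u i * ((\<Sum>j\<in>UNIV. u j) / N)))"
    unfolding B .
  thus ?thesis unfolding u_def N_def s_def .
qed

lemma Qf_pos:
  fixes x :: "'n::finite \<Rightarrow> real^'d::finite"
  assumes "w \<in> span (range x)" "w \<noteq> 0"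
  shows "Qf x w > 0"
proof (rule ccontr)
  assume "\<not> Qf x w > 0"
  hence "Qf x w = 0" using Qf_nonneg[of x w] by simp
  hence "(\<Sum>i\<in>UNIV. (x i \<bullet> w)\<^sup>2) = 0" unfolding Qf_def by simp
  hence "\<forall>i\<in>UNIV. (x i \<bullet> w)\<^sup>2 = 0" by (subst sum_nonneg_eq_0_iff[symmetric]) auto
  hence "\<And>v. v \<in> range x \<Longrightarrow> orthogonal w v" by (auto simp: orthogonal_def inner_commute)
  hence "orthogonal w w" using orthogonal_to_span[OF assms(1)] by blast
  thus False using assms(2) by (simp add: orthogonal_def)
qed

lemma wh_span:
  fixes x :: "'n::finite \<Rightarrow> real^'d::finite"
  assumes "is_svm_solution x y wh"
  shows "wh \<in> span (range x)"
proof -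
  obtain p z where p: "p \<in> span (range x)" and z: "\<And>v. v \<in> span (range x) \<Longrightarrow> orthogonal z v"
    and wpz: "wh = p + z"
    using orthogonal_subspace_decomp_exists[of "range x" wh] by blast
  have "x i \<bullet> z = 0" for i using z[of "x i"] by (auto simp: orthogonal_def inner_commute span_base)
  hence "x i \<bullet> p = x i \<bullet> wh" for i unfolding wpz by (simp add: inner_add_right)
  hence "\<forall>i. y i * (x i \<bullet> p) \<ge> 1" using assms unfolding is_svm_solution_def by simp
  hence le: "norm wh \<le> norm p" using assms unfolding is_svm_solution_def by blast
  have pz: "p \<bullet> z = 0" using z[OF p] by (simp add: orthogonal_def inner_commute)
  have "(norm wh)\<^sup>2 = (norm p)\<^sup>2 + (norm z)\<^sup>2"
    unfolding wpz power2_norm_eq_inner using pz by (simp add: inner_add_left inner_add_right inner_commute)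
  moreover have "(norm wh)\<^sup>2 \<le> (norm p)\<^sup>2" using le by (simp add: power_mono)
  ultimately have "(norm z)\<^sup>2 \<le> 0" by simp
  hence "z = 0" by simp
  thus ?thesis using p wpz by simp
qed

lemma rho_perp_le:
  fixes W wh :: "real^'d::finite"
  assumes "W \<noteq> 0"
  shows "rho_perp wh W \<le> norm (wh - c *\<^sub>R W)"
proof -
  define c0 where "c0 = rho wh W / norm W"
  define r where "r = wh - c0 *\<^sub>R W"
  have nW: "norm W > 0" using assms by simp
  have "c0 = (wh \<bullet> W) / (W \<bullet> W)" unfolding c0_def rho_def
    by (simp add: power2_norm_eq_inner[symmetric] power2_eq_square)
  hence rW: "r \<bullet> W = 0" unfolding r_def using assms by (simp add: inner_diff_left)
  have "wh - c *\<^sub>R W = r + (c0 - c) *\<^sub>R W" unfolding r_def by (simp add: algebra_simps)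
  hence "(norm (wh - c *\<^sub>R W))\<^sup>2 = (norm r)\<^sup>2 + (c0 - c)\<^sup>2 * (norm W)\<^sup>2"
    unfolding power2_norm_eq_inner using rW
    by (simp add: inner_add_left inner_add_right inner_commute power2_eq_square algebra_simps)
  hence "(norm r)\<^sup>2 \<le> (norm (wh - c *\<^sub>R W))\<^sup>2" by (simp add: add_nonneg_nonneg)
  hence "norm r \<le> norm (wh - c *\<^sub>R W)" by (simp add: power2_le_iff_abs_le)
  thus ?thesis unfolding rho_perp_def r_def c0_def .
qed

lemma lambda_min_le:
  fixes x :: "'n::finite \<Rightarrow> real^'d::finite"
  assumes "v \<in> span (range x)" "v \<noteq> 0"
  shows "lambda_min x y * (norm v)\<^sup>2 \<le> (signorm x y v)\<^sup>2"
proof -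
  have "lambda_min x y \<le> (signorm x y v)\<^sup>2 / (norm v)\<^sup>2"
    unfolding lambda_min_def
    by (rule cInf_lower) (use assms in \<open>auto intro!: bdd_belowI[where m=0]\<close>)
  thus ?thesis using assms by (simp add: field_simps)
qed

lemma lambda_min_nonneg:
  fixes x :: "'n::finite \<Rightarrow> real^'d::finite"
  assumes "v \<in> span (range x)" "v \<noteq> 0"
  shows "lambda_min x y \<ge> 0"
  unfolding lambda_min_def
  by (rule cInf_greatest) (use assms in auto)


theorem lemma5p4:
  fixes x :: "'n::finite \<Rightarrow> real^'d::finite" and y :: "'n \<Rightarrow> real"
    and w :: "nat \<Rightarrow> real^'d" and \<alpha> :: "nat \<Rightarrow> real"
    and \<eta> \<eta>\<^sub>\<alpha> :: real and wh :: "real^'d" and t :: nat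
  assumes labels: "\<forall>i. y i = 1 \<or> y i = -1"
    and overparam: "CARD('n) < CARD('d)" "rank (data_matrix x) = CARD('n)"
    and separable: "\<exists>v. \<forall>i. y i * (x i \<bullet> v) > 0"
    and init: "w 0 \<in> span (range x) - {0}" "\<alpha> 0 > 0"
    and steps: "\<eta> > 0" "\<eta>\<^sub>\<alpha> > 0"
    and gd_w: "\<forall>k. w (Suc k) = w k - \<eta> *\<^sub>R grad_w x y (w k) (\<alpha> k)"
    and gd_alpha: "\<forall>k. \<alpha> (Suc k) = \<alpha> k - \<eta>\<^sub>\<alpha> * deriv_alpha x y (w k) (\<alpha> k)"
    and svm: "is_svm_solution x y wh"
    and active: "\<forall>i. y i * (x i \<bullet> wh) = 1"
  shows "- \<alpha> t * (wh \<bullet> grad_w x y (w t) (\<alpha> t)) \<ge> 0 \<and>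
         (\<alpha> t > 0 \<longrightarrow>
            - (wh \<bullet> grad_w x y (w t) (\<alpha> t)) \<ge>
              lambda_min x y / 8 * (\<alpha> t * exp (- \<alpha> t) / signorm x y (w t))
                * (rho_perp wh (w t))\<^sup>2)"
proof -
  have yy: "y i * y i = 1" for i using labels by (metis mult_minus_left mult_1 minus_minus)
  have hw: "\<forall>i. x i \<bullet> wh = y i"
  proof
    fix i
    have "y i * (y i * (x i \<bullet> wh)) = y i" using active by simp
    thus "x i \<bullet> wh = y i" using yy[of i] by (simp add: mult.assoc[symmetric])
  qed
  have inv: "w k \<in> span (range x) \<and> w k \<noteq> 0" for k
  proof (induction k)
    case 0
    then show ?case using init by simp
  next
    case (Suc k)
    have q0: "Qf x (w k) > 0" using Qf_pos Suc by blast
    define G where "G = gradG x y (w k) (\<alpha> k)"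
    have ws: "w (Suc k) = w k - \<eta> *\<^sub>R G" using gd_w grad_w_eq[OF labels q0] unfolding G_def by simp
    have "w (Suc k) \<in> span (range x)" unfolding ws G_def
      using Suc gradG_span by (intro span_diff span_scale) auto
    moreover have "w (Suc k) \<noteq> 0"
    proof -
      have o: "w k \<bullet> G = 0" unfolding G_def by (rule gradG_inner_self[OF q0])
      have "w (Suc k) \<bullet> w (Suc k) = w k \<bullet> w k + \<eta>\<^sup>2 * (G \<bullet> G)"
        unfolding ws using o by (simp add: inner_diff_left inner_diff_right inner_commute power2_eq_square)
      moreover have "w k \<bullet> w k > 0" using Suc by simp
      moreover have "\<eta>\<^sup>2 * (G \<bullet> G) \<ge> 0" by simp
      ultimately have "w (Suc k) \<bullet> w (Suc k) > 0" by linarith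
      thus ?thesis by auto
    qed
    ultimately show ?case by simp
  qed
  define W where "W = w t"
  define A where "A = \<alpha> t"
  define N where "N = real CARD('n)"
  have WS: "W \<in> span (range x)" "W \<noteq> 0" using inv[of t] unfolding W_def by auto
  have q0: "Qf x W > 0" using Qf_pos WS by blast
  define s where "s = sv x W"
  have s0: "s > 0" unfolding s_def sv_def using q0 by simp
  have N0: "N > 0" unfolding N_def by simp
  have sig: "signorm x y W = s" unfolding s_def sv_def signorm_eq[OF labels] ..
  define G where "G = grad_w x y W A"
  have GG: "G = gradG x y W A" unfolding G_def by (rule grad_w_eq[OF labels q0])
  define u where "u = (\<lambda>i. y i * (x i \<bullet> W) / s)"
  define ub where "ub = (\<Sum>j\<in>UNIV. u j) / N"
  define F where "F = (\<Sum>i\<in>UNIV. sgm A (u i) * (1 - u i * ub))"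
  have eqG: "- (wh \<bullet> G) = A / (N * s) * F"
    unfolding GG F_def ub_def u_def N_def s_def by (rule gradG_inner_wh[OF labels q0 hw])
  have mW: "x i \<bullet> W = s * y i * u i" for i
  proof -
    have "x i \<bullet> W = y i * (y i * (x i \<bullet> W))" using yy[of i] by (simp add: mult.assoc[symmetric])
    thus ?thesis unfolding u_def using s0 by simp
  qed
  have usq: "(\<Sum>i\<in>UNIV. (u i)\<^sup>2) = N"
  proof -
    have "(u i)\<^sup>2 = (x i \<bullet> W)\<^sup>2 / s\<^sup>2" for i
      unfolding u_def using yy[of i] by (simp add: power2_eq_square field_simps)
    hence "(\<Sum>i\<in>UNIV. (u i)\<^sup>2) = (\<Sum>i\<in>UNIV. (x i \<bullet> W)\<^sup>2) / s\<^sup>2" by (simp add: sum_divide_distrib)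
    also have "\<dots> = N" unfolding sum_m2 s_def[symmetric] N_def using s0 by simp
    finally show ?thesis .
  qed
  have ub1: "ub\<^sup>2 \<le> 1" unfolding ub_def N_def using mean_sq_le[of UNIV u] usq unfolding N_def by simp
  have Fpos: "A > 0 \<Longrightarrow> F \<ge> N * (exp (-A)/8) * (1 - ub\<^sup>2)"
    unfolding F_def ub_def N_def using key_scalar[of UNIV A u] usq unfolding N_def by simp
  have F0: "F \<ge> 0" if "A \<noteq> 0"
  proof (cases "A > 0")
    case True
    have "N * (exp (-A)/8) * (1 - ub\<^sup>2) \<ge> 0" using N0 ub1 by simp
    thus ?thesis using Fpos[OF True] by linarith
  next
    case False
    hence An: "-A > 0" using that by simp
    define v where "v = (\<lambda>i. - u i)"
    have vsq: "(\<Sum>i\<in>UNIV. (v i)\<^sup>2) = real (card (UNIV :: 'n set))" unfolding v_def using usq N_def by simp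
    have "F = (\<Sum>i\<in>UNIV. sgm (-A) (v i) * (1 - v i * ((\<Sum>j\<in>UNIV. v j) / real (card (UNIV :: 'n set)))))"
      unfolding F_def ub_def v_def N_def by (simp add: sgm_def sum_negf)
    moreover have "(\<Sum>i\<in>UNIV. sgm (-A) (v i) * (1 - v i * ((\<Sum>j\<in>UNIV. v j) / real (card (UNIV :: 'n set)))))
        \<ge> real (card (UNIV :: 'n set)) * (exp (-(-A))/8) * (1 - ((\<Sum>j\<in>UNIV. v j) / real (card (UNIV :: 'n set)))\<^sup>2)"
      using key_scalar[of "UNIV :: 'n set" "-A" v] An vsq by simp
    moreover have "((\<Sum>j\<in>UNIV. v j) / real (card (UNIV :: 'n set)))\<^sup>2 \<le> 1"
      using mean_sq_le[of "UNIV :: 'n set" v] vsq by simp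
    ultimately show ?thesis by (smt (verit) mult_nonneg_nonneg exp_gt_zero of_nat_0_le_iff divide_nonneg_pos)
  qed
  have C1: "- A * (wh \<bullet> G) \<ge> 0"
  proof (cases "A = 0")
    case True thus ?thesis by simp
  next
    case False
    have "- A * (wh \<bullet> G) = A * (- (wh \<bullet> G))" by simp
    also have "\<dots> = A * (A / (N * s) * F)" unfolding eqG ..
    also have "\<dots> = (A * A) / (N * s) * F" by simp
    also have "\<dots> \<ge> 0" using F0[OF False] N0 s0 by simp
    finally show ?thesis .
  qed
  have C2: "- (wh \<bullet> G) \<ge> lambda_min x y / 8 * (A * exp (- A) / s) * (rho_perp wh W)\<^sup>2" if A0: "A > 0"
  proof -
    define v where "v = wh - (ub / s) *\<^sub>R W"
    have xv: "x i \<bullet> v = y i * (1 - ub * u i)" for i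
      unfolding v_def using hw mW s0 by (simp add: inner_diff_right algebra_simps)
    have Qv: "Qf x v = 1 - ub\<^sup>2"
    proof -
      have "(x i \<bullet> v)\<^sup>2 = 1 - 2 * ub * u i + ub\<^sup>2 * (u i)\<^sup>2" for i
        unfolding xv using yy[of i] by (simp add: power2_eq_square algebra_simps)
      hence "(\<Sum>i\<in>UNIV. (x i \<bullet> v)\<^sup>2) = N - 2 * ub * (\<Sum>i\<in>UNIV. u i) + ub\<^sup>2 * (\<Sum>i\<in>UNIV. (u i)\<^sup>2)"
        unfolding N_def by (simp add: sum.distrib sum_subtractf sum_distrib_left)
      also have "(\<Sum>i\<in>UNIV. (u i)\<^sup>2) = N" by (rule usq)
      also have "(\<Sum>i\<in>UNIV. u i) = N * ub" unfolding ub_def using N0 by simp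
      finally show ?thesis unfolding Qf_def N_def[symmetric] using N0 by (simp add: power2_eq_square field_simps)
    qed
    have sv2: "(signorm x y v)\<^sup>2 = 1 - ub\<^sup>2"
      unfolding signorm_eq[OF labels] Qv using ub1 by simp
    have lam0: "lambda_min x y \<ge> 0" by (rule lambda_min_nonneg[OF WS])
    have rp: "rho_perp wh W \<le> norm v" unfolding v_def by (rule rho_perp_le[OF WS(2)])
    have rp0: "rho_perp wh W \<ge> 0" unfolding rho_perp_def by simp
    have "(rho_perp wh W)\<^sup>2 \<le> (norm v)\<^sup>2" using rp rp0 by (simp add: power_mono)
    hence L1: "lambda_min x y * (rho_perp wh W)\<^sup>2 \<le> lambda_min x y * (norm v)\<^sup>2"
      using lam0 by (simp add: mult_left_mono)
    have L2: "lambda_min x y * (norm v)\<^sup>2 \<le> 1 - ub\<^sup>2"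
    proof (cases "v = 0")
      case True thus ?thesis using ub1 by simp
    next
      case False
      have "v \<in> span (range x)" unfolding v_def
        using wh_span[OF svm] WS by (intro span_diff span_scale) auto
      thus ?thesis using lambda_min_le[OF _ False] sv2 by metis
    qed
    have K: "A * exp (-A) / (8 * s) > 0" using A0 s0 by simp
    have "lambda_min x y / 8 * (A * exp (- A) / s) * (rho_perp wh W)\<^sup>2
        = (A * exp (-A) / (8 * s)) * (lambda_min x y * (rho_perp wh W)\<^sup>2)" by simp
    also have "\<dots> \<le> (A * exp (-A) / (8 * s)) * (1 - ub\<^sup>2)"
      using L1 L2 K by (intro mult_left_mono) auto
    also have "\<dots> = A / (N * s) * (N * (exp (-A)/8) * (1 - ub\<^sup>2))" using N0 s0 by (simp add: field_simps)
    also have "\<dots> \<le> A / (N * s) * F" using Fpos[OF A0] A0 N0 s0 by (intro mult_left_mono) auto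
    finally show ?thesis using eqG by simp
  qed
  show ?thesis using C1 C2 unfolding G_def W_def A_def sig[unfolded W_def] by auto
qed

end
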